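(* Let $\mathcal H$ be a real Hilbert space and $k\ge1$. If a nonzero continuous symmetric $k$-linear form $T$ on $\mathcal H$ attains its norm at $(\mathbf{x}_1,\ldots,\mathbf{x}_k)$, where $\mathbf{x}_1,\ldots,\mathbf{x}_k$ are norm one vectors, then $\dim(\operatorname{span}\{\mathbf{x}_1,\ldots,\mathbf{x}_k\})\le 2$.
   Context: $\|T\|=\sup\{|T(\mathbf{w}_1,\ldots,\mathbf{w}_k)|:\|\mathbf{w}_i\|\le1\}$, and $T$ attains its norm at $(\mathbf{x}_1,\ldots,\mathbf{x}_k)$ if $|T(\mathbf{x}_1,\ldots,\mathbf{x}_k)|=\|T\|$. *)

theory Defs
  imports "HOL-Analysis.Analysis" "HOL-Combinatorics.Permutations"
begin

text \<open>A k-linear form on a real inner product space 'a is modelled as a real-valued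
function on the extensional function space PiE {..<k} (\<lambda>_. UNIV), i.e. on k-tuples
(w 0, ..., w (k-1)) of vectors.\<close>

definition ktuples :: "nat \<Rightarrow> (nat \<Rightarrow> 'a) set" where
  "ktuples k = PiE {..<k} (\<lambda>_. UNIV)"

definition multilinear_form :: "nat \<Rightarrow> ((nat \<Rightarrow> 'a::real_vector) \<Rightarrow> real) \<Rightarrow> bool" where
  "multilinear_form k T \<longleftrightarrow>
     (\<forall>w\<in>ktuples k. \<forall>i<k. linear (\<lambda>v. T (w(i := v))))"

definition symmetric_form :: "nat \<Rightarrow> ((nat \<Rightarrow> 'a) \<Rightarrow> real) \<Rightarrow> bool" where
  "symmetric_form k T \<longleftrightarrow>
     (\<forall>w\<in>ktuples k. \<forall>p. p permutes {..<k} \<longrightarrow> T (w \<circ> p) = T w)"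

definition form_norm :: "nat \<Rightarrow> ((nat \<Rightarrow> 'a::real_normed_vector) \<Rightarrow> real) \<Rightarrow> real" where
  "form_norm k T = Sup {\<bar>T w\<bar> | w. w \<in> ktuples k \<and> (\<forall>i<k. norm (w i) \<le> 1)}"

definition attains_norm_at :: "nat \<Rightarrow> ((nat \<Rightarrow> 'a::real_normed_vector) \<Rightarrow> real) \<Rightarrow> (nat \<Rightarrow> 'a) \<Rightarrow> bool" where
  "attains_norm_at k T x \<longleftrightarrow> x \<in> ktuples k \<and> \<bar>T x\<bar> = form_norm k T"

end

theory Submission
  imports Defs
begin

locale trif =
  fixes G :: "'a::real_inner \<Rightarrow> 'a \<Rightarrow> 'a \<Rightarrow> real"
  assumes add1: "\<And>a b v w. G (a+b) v w = G a v w + G b v w"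
  and scale1: "\<And>r a v w. G (r *\<^sub>R a) v w = r * G a v w"
  and s12: "\<And>u v w. G u v w = G v u w"
  and s23: "\<And>u v w. G u v w = G u w v"
  and bnd: "\<And>u v w. \<bar>G u v w\<bar> \<le> norm u * norm v * norm w"
begin

lemma add2: "G u (a+b) w = G u a w + G u b w"
  by (metis add1 s12)
lemma add3: "G u v (a+b) = G u v a + G u v b"
  by (metis add2 s23)
lemma scale2: "G u (r *\<^sub>R a) w = r * G u a w"
  by (metis scale1 s12)
lemma scale3: "G u v (r *\<^sub>R a) = r * G u v a"
  by (metis scale2 s23)

lemmas lin = add1 add2 add3 scale1 scale2 scale3

lemma grad:
  assumes "norm a = 1" "norm b = 1" "norm c = 1" "G a b c = 1"
  shows "G u b c = inner a u"
proof -
  define v where "v = u - inner a u *\<^sub>R a"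
  have aa: "inner a a = 1" using assms(1) by (simp add: power2_norm_eq_inner[symmetric])
  have av: "inner a v = 0" unfolding v_def by (simp add: inner_diff_right aa)
  have u: "u = inner a u *\<^sub>R a + v" unfolding v_def by simp
  have Gu: "G u b c = inner a u + G v b c"
    by (subst u) (simp add: lin assms(4))
  define g where "g = G v b c"
  define n where "n = (norm v)^2"
  have vv: "inner v v = norm v * norm v"
    by (metis power2_norm_eq_inner power2_eq_square)
  have n0: "n \<ge> 0" unfolding n_def by simp
  define t where "t = g / (n+1)"
  have "G (a + t *\<^sub>R v) b c = 1 + t * g" by (simp add: lin assms(4) g_def)
  moreover have "\<bar>G (a + t *\<^sub>R v) b c\<bar> \<le> norm (a + t *\<^sub>R v)"
    using bnd[of "a + t *\<^sub>R v" b c] assms by simp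
  ultimately have "(1 + t*g)^2 \<le> (norm (a + t *\<^sub>R v))^2"
    by (metis abs_le_square_iff abs_norm_cancel)
  also have "\<dots> = inner (a + t *\<^sub>R v) (a + t *\<^sub>R v)"
    by (simp add: power2_norm_eq_inner)
  also have "\<dots> = 1 + t^2 * n"
    using vv by (simp add: inner_add_left inner_add_right aa av inner_commute n_def power2_eq_square)
  finally have h: "(1 + t*g)^2 \<le> 1 + t^2 * n" .
  have "g = 0"
  proof (rule ccontr)
    assume g0: "g \<noteq> 0"
    have n1: "n + 1 > 0" using n0 by simp
    have "t * g = g^2/(n+1)" unfolding t_def by (simp add: power2_eq_square)
    have "(1 + t*g)^2 = 1 + 2*(t*g) + (t*g)^2" by (simp add: power2_eq_square algebra_simps)
    hence "(1 + t*g)^2 \<ge> 1 + 2*(t*g)" by (smt (verit) zero_le_power2)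
    with h have "2*(t*g) \<le> t^2 * n" by linarith
    hence "2 * (g^2/(n+1)) \<le> (g^2/(n+1)^2) * n"
      unfolding t_def by (simp add: power2_eq_square power_divide)
    moreover have "g^2/(n+1)^2 * n = (g^2/(n+1)) * (n/(n+1))"
      by (simp add: power2_eq_square)
    moreover have "n/(n+1) < 1" using n1 by simp
    moreover have "g^2/(n+1) > 0" using g0 n1 by simp
    ultimately show False by (smt (verit) mult_less_cancel_left1)
  qed
  thus ?thesis using Gu g_def by simp
qed

lemma merge:
  assumes x: "norm x = 1" and y: "norm y = 1" and z: "norm z = 1" and xyz: "G x y z = 1"
    and xy: "x + y \<noteq> 0"
  shows "G u x x + G u y y = 2 * inner x y * inner z u"
proof -
  have xx: "inner x x = 1" using x by (simp add: power2_norm_eq_inner[symmetric])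
  have yy: "inner y y = 1" using y by (simp add: power2_norm_eq_inner[symmetric])
  have g1: "G u x z = inner y u" for u
    by (rule grad[OF y x z]) (metis s12 xyz)
  have g2: "G u y z = inner x u" for u
    by (rule grad[OF x y z xyz])
  have g3: "G u x y = inner z u" for u
    by (rule grad[OF z x y]) (metis s12 s23 xyz)
  define m where "m = norm (x+y)"
  have m2: "m^2 = 2 + 2 * inner x y"
    unfolding m_def by (simp add: power2_norm_eq_inner inner_add_left inner_add_right xx yy inner_commute)
  have m0: "m > 0" unfolding m_def using xy by simp
  define a where "a = (1/m) *\<^sub>R (x+y)"
  have na: "norm a = 1" unfolding a_def m_def using xy by simp
  have "G a a z = (1/m^2) * (G x x z + G x y z + G y x z + G y y z)"
    unfolding a_def using m0 by (simp add: lin power2_eq_square field_simps)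
  also have "\<dots> = (1/m^2) * (2 + 2 * inner x y)"
    using g1[of x] g2[of y] xyz s12[of y x z] by (simp add: inner_commute)
  also have "\<dots> = 1" using m0 by (subst m2[symmetric]) simp
  finally have "G a a z = 1" .
  hence "G z a a = 1" by (metis s12 s23)
  hence ga: "G u a a = inner z u" for u by (rule grad[OF z na na])
  have "G u a a = (1/m^2) * (G u x x + 2 * G u x y + G u y y)"
    unfolding a_def by (simp add: lin power2_eq_square s23[of u y x] algebra_simps)
  hence "G u x x + 2 * inner z u + G u y y = m^2 * inner z u"
    using ga g3 m0 by (simp add: field_simps)
  thus ?thesis using m2 by (simp add: algebra_simps)
qed

lemma main3:
  assumes x: "norm x = 1" and y: "norm y = 1" and z: "norm z = 1" and xyz: "G x y z = 1"
    and ny: "y \<notin> span {x}"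
  shows "z \<in> span {x, y}"
proof (cases "x + z = 0 \<or> y + z = 0")
  case True
  hence "z = -x \<or> z = -y" by (metis add.commute add_eq_0_iff2 minus_unique)
  thus ?thesis by (metis insert_commute insert_iff span_base span_neg)
next
  case False
  have xy: "x + y \<noteq> 0"
  proof
    assume "x + y = 0" hence "y = (-1) *\<^sub>R x" by (simp add: eq_neg_iff_add_eq_0 add.commute)
    thus False using ny by (metis insertI1 span_base span_scale)
  qed
  have xx: "inner x x = 1" using x by (simp add: power2_norm_eq_inner[symmetric])
  have yy: "inner y y = 1" using y by (simp add: power2_norm_eq_inner[symmetric])
  have zz: "inner z z = 1" using z by (simp add: power2_norm_eq_inner[symmetric])
  define c1 where "c1 = inner y z"
  define c2 where "c2 = inner x z"
  define c3 where "c3 = inner x y"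
  have xzy: "G x z y = 1" by (metis s23 xyz)
  have yzx: "G y z x = 1" by (metis s12 s23 xyz)
  have m1: "G u x x + G u y y = 2 * c3 * inner z u" for u
    using merge[OF x y z xyz xy] c3_def by simp
  have m2: "G u x x + G u z z = 2 * c2 * inner y u" for u
    using merge[OF x z y xzy] False c2_def by simp
  have m3: "G u y y + G u z z = 2 * c1 * inner x u" for u
    using merge[OF y z x yzx] False c1_def by simp
  have sumG: "G u x x + G u y y + G u z z = c3 * inner z u + c2 * inner y u + c1 * inner x u" for u
    using m1[of u] m2[of u] m3[of u] by linarith
  have g1: "G u x z = inner y u" for u
    by (rule grad[OF y x z]) (metis s12 xyz)
  have g2: "G u y z = inner x u" for u
    by (rule grad[OF x y z xyz])
  have g3: "G u x y = inner z u" for u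
    by (rule grad[OF z x y]) (metis s12 s23 xyz)
  define s where "s = x + y + z"
  define V where "V = (c1+2) *\<^sub>R x + (c2+2) *\<^sub>R y + (c3+2) *\<^sub>R z"
  have "G V s s = (G V x x + G V y y + G V z z) + 2 * G V x y + 2 * G V x z + 2 * G V y z"
    unfolding s_def by (simp add: lin s23[of V y x] s23[of V z x] s23[of V z y] algebra_simps)
  also have "\<dots> = inner V V"
    unfolding sumG g1 g2 g3 by (simp add: V_def inner_add_left inner_add_right algebra_simps)
  finally have GV: "G V s s = inner V V" .
  have "inner V V \<le> norm V * norm s * norm s" using bnd[of V s s] GV by simp
  hence "norm V * norm V \<le> norm V * (norm s * norm s)"
    by (metis power2_norm_eq_inner power2_eq_square mult.assoc)
  hence "norm V \<le> norm s * norm s"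
    by (metis mult_le_cancel_left norm_ge_zero order_less_le mult_eq_0_iff mult_nonneg_nonneg norm_ge_zero zero_le_mult_iff)
  hence "norm V * norm V \<le> (norm s * norm s) * (norm s * norm s)"
    by (simp add: mult_mono)
  hence VS: "inner V V \<le> (inner s s)^2"
    by (metis power2_norm_eq_inner power2_eq_square)
  define w where "w = (1 - c3^2) *\<^sub>R z - (c2 - c1*c3) *\<^sub>R x - (c1 - c2*c3) *\<^sub>R y"
  have ident: "(1 - c3^2) * (inner V V - (inner s s)^2) = 3 * inner w w"
    unfolding V_def s_def w_def
    by (simp add: inner_add_left inner_add_right inner_diff_left inner_diff_right xx yy zz
        inner_commute c1_def[symmetric] c2_def[symmetric] c3_def[symmetric]) (simp add: c1_def c2_def c3_def inner_commute power2_eq_square algebra_simps)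
  have c3n: "c3^2 < 1"
  proof (rule ccontr)
    assume "\<not> c3^2 < 1"
    moreover have "\<bar>c3\<bar> \<le> 1" unfolding c3_def using Cauchy_Schwarz_ineq2[of x y] x y by simp
    ultimately have c31: "c3^2 = 1" using abs_le_square_iff[of c3 1] by simp
    have "inner (y - c3 *\<^sub>R x) (y - c3 *\<^sub>R x) = 1 - c3^2"
      by (simp add: inner_diff_left inner_diff_right xx yy c3_def inner_commute power2_eq_square)
    hence "y - c3 *\<^sub>R x = 0" using c31 by simp
    hence "y = c3 *\<^sub>R x" by simp
    thus False using ny by (metis insertI1 span_base span_scale)
  qed
  have "(1-c3^2) * (inner V V - (inner s s)^2) \<le> 0"
    by (rule mult_nonneg_nonpos) (use VS c3n in auto)
  hence "3 * inner w w \<le> 0" using ident by simp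
  moreover have "inner w w \<ge> 0" by simp
  ultimately have "inner w w = 0" by linarith
  hence "w = 0" by simp
  hence "(1 - c3^2) *\<^sub>R z = (c2 - c1*c3) *\<^sub>R x + (c1 - c2*c3) *\<^sub>R y"
    unfolding w_def by (simp add: algebra_simps)
  moreover have "z = (1/(1 - c3^2)) *\<^sub>R ((1 - c3^2) *\<^sub>R z)"
    using c3n by simp
  ultimately have "z = (1/(1 - c3^2)) *\<^sub>R ((c2 - c1*c3) *\<^sub>R x + (c1 - c2*c3) *\<^sub>R y)"
    by simp
  thus ?thesis by (simp add: span_add span_base span_scale)
qed

end

lemma trif_intro:
  fixes G :: "'a::real_inner \<Rightarrow> 'a \<Rightarrow> 'a \<Rightarrow> real"
  assumes add1: "\<And>a b v w. G (a+b) v w = G a v w + G b v w"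
  and scale1: "\<And>r a v w. G (r *\<^sub>R a) v w = r * G a v w"
  and s12: "\<And>u v w. G u v w = G v u w"
  and s23: "\<And>u v w. G u v w = G u w v"
  and b1: "\<And>u v w. norm u = 1 \<Longrightarrow> norm v = 1 \<Longrightarrow> norm w = 1 \<Longrightarrow> \<bar>G u v w\<bar> \<le> 1"
  shows "trif G"
proof
  fix u v w :: 'a
  have scale2: "G u (r *\<^sub>R a) w = r * G u a w" for u r a w by (metis scale1 s12)
  have scale3: "G u v (r *\<^sub>R a) = r * G u v a" for u v r a by (metis scale2 s23)
  show "\<bar>G u v w\<bar> \<le> norm u * norm v * norm w"
  proof (cases "u = 0 \<or> v = 0 \<or> w = 0")
    case True
    have "G u v w = 0"
      using True scale1[of 0 0 v w] scale2[of u 0 0 w] scale3[of u v 0 0] by auto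
    thus ?thesis by simp
  next
    case False
    define u' where "u' = (1/norm u) *\<^sub>R u"
    define v' where "v' = (1/norm v) *\<^sub>R v"
    define w' where "w' = (1/norm w) *\<^sub>R w"
    have "u = norm u *\<^sub>R u'" "v = norm v *\<^sub>R v'" "w = norm w *\<^sub>R w'"
      using False by (auto simp: u'_def v'_def w'_def)
    hence "G u v w = norm u * norm v * norm w * G u' v' w'"
      by (metis scale1 scale2 scale3 mult.assoc)
    moreover have "\<bar>G u' v' w'\<bar> \<le> 1" using False by (intro b1) (auto simp: u'_def v'_def w'_def)
    ultimately show ?thesis
      by (simp add: abs_mult mult_left_le)
  qed
qed (use assms in auto)

lemma kt_upd: "w \<in> ktuples k \<Longrightarrow> i < k \<Longrightarrow> w(i := v) \<in> ktuples k"
  by (auto simp: ktuples_def PiE_iff extensional_def)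

lemma ml_lin: "multilinear_form k T \<Longrightarrow> w \<in> ktuples k \<Longrightarrow> i < k \<Longrightarrow> linear (\<lambda>v. T (w(i := v)))"
  by (simp add: multilinear_form_def)

lemma scale_tuple:
  assumes ml: "multilinear_form k T" and w: "w \<in> ktuples k"
  shows "m \<le> k \<Longrightarrow> T (\<lambda>i. if i < m then c *\<^sub>R w i else w i) = c^m * T w"
proof (induction m)
  case 0 then show ?case by simp
next
  case (Suc m)
  let ?w = "\<lambda>i. if i < m then c *\<^sub>R w i else w i"
  have wm: "?w \<in> ktuples k" using w Suc.prems by (auto simp: ktuples_def PiE_iff extensional_def)
  have eq: "(\<lambda>i. if i < Suc m then c *\<^sub>R w i else w i) = ?w(m := c *\<^sub>R w m)" by auto
  have "T (\<lambda>i. if i < Suc m then c *\<^sub>R w i else w i) = T (?w(m := c *\<^sub>R w m))"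
    by (simp only: eq)
  also have "\<dots> = c * T (?w(m := w m))"
    using real_vector.linear_scale[OF ml_lin[OF ml wm, of m]] Suc.prems by simp
  also have "?w(m := w m) = ?w" by (rule fun_upd_idem) simp
  also have "T ?w = c^m * T w" using Suc by simp
  finally show ?case by simp
qed

lemma scaled_in: "w \<in> ktuples k \<Longrightarrow> (\<lambda>i. if i < k then c *\<^sub>R w i else w i) \<in> ktuples k"
  by (auto simp: ktuples_def PiE_iff extensional_def)

lemma bounded_T:
  fixes T :: "(nat \<Rightarrow> 'a::real_normed_vector) \<Rightarrow> real"
  assumes k: "k \<ge> 1" and ml: "multilinear_form k T" and ct: "continuous_on (ktuples k) T"
  shows "\<exists>B. \<forall>w\<in>ktuples k. (\<forall>i<k. norm (w i) \<le> 1) \<longrightarrow> \<bar>T w\<bar> \<le> B"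
proof -
  define z0 :: "nat \<Rightarrow> 'a" where "z0 = (\<lambda>i. if i < k then 0 else undefined)"
  have z0K: "z0 \<in> ktuples k" by (auto simp: z0_def ktuples_def PiE_iff extensional_def)
  have Tz0: "T z0 = 0"
  proof -
    have "T (z0(0 := 0)) = 0" using real_vector.linear_0[OF ml_lin[OF ml z0K, of 0]] k by simp
    moreover have "z0(0:=0) = z0" using k by (auto simp: z0_def)
    ultimately show ?thesis by simp
  qed
  have "\<exists>A. open A \<and> z0 \<in> A \<and> (\<forall>y\<in>ktuples k. y \<in> A \<longrightarrow> T y \<in> {-1<..<1})"
    using continuous_on_topological[THEN iffD1, OF ct, rule_format, OF z0K, of "{-1<..<1}"] Tz0
    by simp
  then obtain A where A: "open A" "z0 \<in> A" and A3': "\<forall>y\<in>ktuples k. y \<in> A \<longrightarrow> T y \<in> {-1<..<1}"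
    by blast
  have A3: "\<bar>T y\<bar> < 1" if "y \<in> ktuples k" "y \<in> A" for y
    using A3' that by (auto simp: abs_less_iff)
  have "openin (product_topology (\<lambda>i. euclidean) UNIV) A" using A(1) by (simp add: open_fun_def)
  from product_topology_open_contains_basis[OF this A(2)]
  obtain X where X: "z0 \<in> (\<Pi>\<^sub>E i\<in>UNIV. X i)" "\<And>i. open (X i)" "(\<Pi>\<^sub>E i\<in>UNIV. X i) \<subseteq> A"
    by auto
  have "\<forall>i\<in>{..<k}. \<exists>e>0. ball 0 e \<subseteq> X i"
  proof
    fix i assume "i \<in> {..<k}"
    moreover have "z0 i \<in> X i" using X(1) by (simp add: PiE_iff)
    ultimately have "0 \<in> X i" by (simp add: z0_def)
    thus "\<exists>e>0. ball 0 e \<subseteq> X i" using X(2) open_contains_ball by blast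
  qed
  then obtain e where e: "\<And>i. i \<in> {..<k} \<Longrightarrow> e i > 0 \<and> ball 0 (e i) \<subseteq> X i"
    by metis
  define \<delta> where "\<delta> = Min (e ` {..<k})"
  have \<delta>0: "\<delta> > 0" unfolding \<delta>_def using e k by (subst Min_gr_iff) (auto simp: lessThan_empty_iff)
  have \<delta>e: "\<delta> \<le> e i" if "i < k" for i unfolding \<delta>_def using that by (intro Min_le) auto
  have small: "\<bar>T w\<bar> < 1" if w: "w \<in> ktuples k" "\<And>i. i < k \<Longrightarrow> norm (w i) < \<delta>" for w
  proof -
    have "w \<in> (\<Pi>\<^sub>E i\<in>UNIV. X i)"
    proof -
      have "w i \<in> X i" for i
      proof (cases "i < k")
        case True
        hence "w i \<in> ball 0 (e i)" using w(2)[OF True] \<delta>e[OF True] by simp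
        thus ?thesis using e[of i] True by auto
      next
        case False
        hence "w i = z0 i" using w(1) by (auto simp: ktuples_def z0_def PiE_iff extensional_def)
        thus ?thesis using X(1) by (auto simp: PiE_iff)
      qed
      thus ?thesis by (auto simp: PiE_iff)
    qed
    thus ?thesis using X(3) A3 w(1) by blast
  qed
  define c where "c = \<delta> / 2"
  have c0: "c > 0" using \<delta>0 c_def by simp
  show ?thesis
  proof (intro exI ballI impI)
    fix w :: "nat \<Rightarrow> 'a" assume w: "w \<in> ktuples k" and n1: "\<forall>i<k. norm (w i) \<le> 1"
    let ?w = "\<lambda>i. if i < k then c *\<^sub>R w i else w i"
    have "\<bar>T ?w\<bar> < 1"
    proof (rule small)
      show "?w \<in> ktuples k" using scaled_in[OF w] .
      fix i assume "i < k"
      hence "norm (?w i) = c * norm (w i)" using c0 by simp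
      also have "\<dots> \<le> c" using n1 \<open>i<k\<close> c0 by (simp add: mult_left_le)
      also have "\<dots> < \<delta>" using c_def \<delta>0 by simp
      finally show "norm (?w i) < \<delta>" .
    qed
    moreover have "T ?w = c^k * T w" using scale_tuple[OF ml w, of k c] by simp
    ultimately have "c^k * \<bar>T w\<bar> < 1" using c0 by (simp add: abs_mult)
    hence "\<bar>T w\<bar> < 1 / c^k" using c0 by (simp add: field_simps)
    thus "\<bar>T w\<bar> \<le> 1 / c^k" by simp
  qed
qed
theorem proposition4p1:
  fixes T :: "(nat \<Rightarrow> 'a::{real_inner, complete_space}) \<Rightarrow> real"
    and x :: "nat \<Rightarrow> 'a"
    and k :: nat
  assumes "k \<ge> 1"
    and "multilinear_form k T"
    and "symmetric_form k T"
    and "continuous_on (ktuples k) T"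
    and "\<exists>w\<in>ktuples k. T w \<noteq> 0"
    and "\<forall>i<k. norm (x i) = 1"
    and "attains_norm_at k T x"
  shows "dim (span (x ` {..<k})) \<le> 2"
proof -
  let ?S = "x ` {..<k}"
  have xK: "x \<in> ktuples k" using assms(7) by (simp add: attains_norm_at_def)
  define M where "M = form_norm k T"
  have TxM: "\<bar>T x\<bar> = M" using assms(7) by (simp add: attains_norm_at_def M_def)
  obtain B where B: "\<forall>w\<in>ktuples k. (\<forall>i<k. norm (w i) \<le> 1) \<longrightarrow> \<bar>T w\<bar> \<le> B"
    using bounded_T[OF assms(1) assms(2) assms(4)] by blast
  have bdd: "bdd_above {\<bar>T w\<bar> | w. w \<in> ktuples k \<and> (\<forall>i<k. norm (w i) \<le> 1)}"
    using B by (auto intro!: bdd_aboveI[where M=B])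
  have le: "\<bar>T w\<bar> \<le> M" if "w \<in> ktuples k" "\<forall>i<k. norm (w i) \<le> 1" for w
    unfolding M_def form_norm_def using that by (intro cSup_upper[OF _ bdd]) auto
  have Tx0: "T x \<noteq> 0"
  proof
    assume "T x = 0"
    hence M0: "M = 0" using TxM by simp
    obtain w where w: "w \<in> ktuples k" "T w \<noteq> 0" using assms(5) by blast
    define \<Sigma> where "\<Sigma> = (\<Sum>i<k. norm (w i))"
    have \<Sigma>0: "\<Sigma> \<ge> 0" unfolding \<Sigma>_def by (simp add: sum_nonneg)
    define c where "c = 1 / (1 + \<Sigma>)"
    have c0: "c > 0" unfolding c_def using \<Sigma>0 by simp
    let ?w = "\<lambda>i. if i < k then c *\<^sub>R w i else w i"
    have "norm (?w i) \<le> 1" if "i<k" for i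
    proof -
      have "norm (w i) \<le> \<Sigma>" unfolding \<Sigma>_def using that by (intro member_le_sum) auto
      hence "c * norm (w i) \<le> 1" using \<Sigma>0 by (simp add: c_def field_simps)
      thus ?thesis using that c0 by simp
    qed
    hence "\<bar>T ?w\<bar> \<le> 0" using le[of ?w] scaled_in[OF w(1)] M0 by auto
    moreover have "T ?w = c^k * T w" using scale_tuple[OF assms(2) w(1), of k c] by simp
    ultimately show False using c0 w(2) by simp
  qed
  have key: "x l \<in> span {x i, x j}"
    if ijl: "i<k" "j<k" "l<k" "i\<noteq>j" "i\<noteq>l" "j\<noteq>l" and nsp: "x j \<notin> span {x i}" for i j l
  proof -
    define G where "G = (\<lambda>u v t. T (x(i:=u, j:=v, l:=t)) / T x)"
    have updK: "x(i:=u, j:=v, l:=t) \<in> ktuples k" for u v t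
      using xK ijl by (intro kt_upd) auto
    have sw: "T (w \<circ> Transposition.transpose a b) = T w" if "w \<in> ktuples k" "a<k" "b<k" for w a b
      using assms(3) that permutes_swap_id[of a "{..<k}" b] unfolding symmetric_form_def by auto
    have lin1: "linear (\<lambda>u. T (x(i:=u, j:=v, l:=t)))" for v t
    proof -
      have "x(j:=v, l:=t) \<in> ktuples k" using xK ijl by (intro kt_upd) auto
      from ml_lin[OF assms(2) this \<open>i<k\<close>]
      have "linear (\<lambda>u. T ((x(j:=v, l:=t))(i:=u)))" .
      moreover have "(x(j:=v, l:=t))(i:=u) = x(i:=u, j:=v, l:=t)" for u
        by (rule ext) (use ijl in auto)
      ultimately show ?thesis by simp
    qed
    have add1: "G (a+b) v t = G a v t + G b v t" for a b v t
      unfolding G_def using real_vector.linear_add[OF lin1[of v t], of a b] by (simp add: add_divide_distrib)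
    have scale1: "G (r *\<^sub>R a) v t = r * G a v t" for r a v t
      unfolding G_def using real_vector.linear_scale[OF lin1[of v t], of r a] by simp
    have s12: "G u v t = G v u t" for u v t
    proof -
      have "x(i:=v, j:=u, l:=t) = x(i:=u, j:=v, l:=t) \<circ> Transposition.transpose i j"
        by (rule ext) (use ijl in \<open>auto simp: Transposition.transpose_def\<close>)
      thus ?thesis unfolding G_def using sw[OF updK \<open>i<k\<close> \<open>j<k\<close>, of u v t] by simp
    qed
    have s23: "G u v t = G u t v" for u v t
    proof -
      have "x(i:=u, j:=t, l:=v) = x(i:=u, j:=v, l:=t) \<circ> Transposition.transpose j l"
        by (rule ext) (use ijl in \<open>auto simp: Transposition.transpose_def\<close>)
      thus ?thesis unfolding G_def using sw[OF updK \<open>j<k\<close> \<open>l<k\<close>, of u v t] by simp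
    qed
    have b1: "\<bar>G u v t\<bar> \<le> 1" if "norm u = 1" "norm v = 1" "norm t = 1" for u v t
    proof -
      have "\<forall>m<k. norm ((x(i:=u, j:=v, l:=t)) m) \<le> 1"
        using that assms(6) by auto
      hence "\<bar>T (x(i:=u, j:=v, l:=t))\<bar> \<le> M" by (rule le[OF updK])
      hence le1: "\<bar>T (x(i:=u, j:=v, l:=t))\<bar> \<le> \<bar>T x\<bar>" by (simp only: TxM)
      have "\<bar>G u v t\<bar> = \<bar>T (x(i:=u, j:=v, l:=t))\<bar> / \<bar>T x\<bar>"
        unfolding G_def by (rule abs_divide)
      also have "\<dots> \<le> 1" using le1 Tx0 by (subst divide_le_eq_1_pos) auto
      finally show ?thesis .
    qed
    have tr: "trif G" by (rule trif_intro[OF add1 scale1 s12 s23 b1])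
    have "G (x i) (x j) (x l) = 1" unfolding G_def using Tx0 by simp
    from trif.main3[OF tr _ _ _ this nsp] assms(6) ijl show ?thesis by simp
  qed
  show ?thesis
  proof (cases "k \<le> 2")
    case True
    have "dim (span ?S) = dim ?S" by (rule real_vector.dim_span)
    also have "\<dots> \<le> card ?S" by (rule real_vector.dim_le_card') simp
    also have "\<dots> \<le> card {..<k}" by (rule card_image_le) simp
    finally show ?thesis using True by simp
  next
    case False
    show ?thesis
    proof (cases "\<forall>j<k. x j \<in> span {x 0}")
      case True
      hence "?S \<subseteq> span {x 0}" by auto
      hence "dim ?S \<le> card {x 0}" by (rule real_vector.dim_le_card) simp
      thus ?thesis by (simp add: real_vector.dim_span)
    next
      case False
      then obtain j where j: "j<k" "x j \<notin> span {x 0}" by blast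
      have j0: "j \<noteq> 0" using j by (metis insertI1 real_vector.span_base)
      have "?S \<subseteq> span {x 0, x j}"
      proof
        fix y assume "y \<in> ?S"
        then obtain l where l: "l<k" "y = x l" by auto
        show "y \<in> span {x 0, x j}"
        proof (cases "l = 0 \<or> l = j")
          case True thus ?thesis using l by (auto intro: real_vector.span_base)
        next
          case False thus ?thesis using l j j0 key[of 0 j l] by auto
        qed
      qed
      hence "dim ?S \<le> card {x 0, x j}" by (rule real_vector.dim_le_card) simp
      also have "card {x 0, x j} \<le> 2" by (cases "x 0 = x j") auto
      finally show ?thesis by (simp add: real_vector.dim_span)
    qed
  qed
qed

end
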